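(* Every COI-graph $G$ has a proxy graph, i.e. there exists a NOI-graph $G'$ on the same vertex set such that the kernels of the hybrid Laplacians $\mathcal{L}(G)$ and $\mathcal{L}(G')$ are identical.
   Context: A hybrid graph $G=(V,E_L+E_Q)$ has a set $E_L$ of $L$-edges and a set $E_Q$ of $Q$-edges. Its hybrid Laplacian is $\mathcal{L}(G)=L(S_l)+Q(S_q)$ with $S_l=(V,E_L)$, $S_q=(V,E_Q)$, $L=D-A$ the signed Laplacian and $Q=D+A$ the signless Laplacian. $G$ is a NOI-graph if $S_q$ is bipartite and no vertex is incident to both a $Q$-edge and an $L$-edge. $G$ is a COI-graph if $S_q$ is bipartite with a bipartition $(P_1,P_2)$ of $V$ (every $Q$-edge joining $P_1$ to $P_2$) such that every $L$-edge joins two vertices in the same part. *)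

theory Defs
  imports Complex_Main
begin

definition hybrid_graph :: "'a set \<Rightarrow> 'a set set \<Rightarrow> 'a set set \<Rightarrow> bool" where
  "hybrid_graph V EL EQ \<longleftrightarrow> finite V \<and> (\<forall>e \<in> EL \<union> EQ. e \<subseteq> V \<and> card e = 2) \<and> EL \<inter> EQ = {}"

definition deg :: "'a set set \<Rightarrow> 'a \<Rightarrow> nat" where
  "deg E v = card {e \<in> E. v \<in> e}"

definition adj :: "'a set set \<Rightarrow> 'a \<Rightarrow> 'a \<Rightarrow> real" where
  "adj E i j = (if i \<noteq> j \<and> {i, j} \<in> E then 1 else 0)"

definition laplacian :: "'a set set \<Rightarrow> 'a \<Rightarrow> 'a \<Rightarrow> real" where
  "laplacian E i j = (if i = j then real (deg E i) else 0) - adj E i j"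

definition signless_laplacian :: "'a set set \<Rightarrow> 'a \<Rightarrow> 'a \<Rightarrow> real" where
  "signless_laplacian E i j = (if i = j then real (deg E i) else 0) + adj E i j"

definition hybrid_laplacian :: "'a set set \<Rightarrow> 'a set set \<Rightarrow> 'a \<Rightarrow> 'a \<Rightarrow> real" where
  "hybrid_laplacian EL EQ i j = laplacian EL i j + signless_laplacian EQ i j"

text \<open>Kernel of the V x V matrix M: vectors in R^V (functions vanishing off V) with Mx = 0.\<close>

definition mat_kernel :: "'a set \<Rightarrow> ('a \<Rightarrow> 'a \<Rightarrow> real) \<Rightarrow> ('a \<Rightarrow> real) set" where
  "mat_kernel V M = {x. (\<forall>v. v \<notin> V \<longrightarrow> x v = 0) \<and> (\<forall>i \<in> V. (\<Sum>j\<in>V. M i j * x j) = 0)}"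

definition bipartite_on :: "'a set \<Rightarrow> 'a set set \<Rightarrow> bool" where
  "bipartite_on V E \<longleftrightarrow> (\<exists>P1 P2. P1 \<union> P2 = V \<and> P1 \<inter> P2 = {} \<and>
      (\<forall>e \<in> E. \<exists>a \<in> P1. \<exists>b \<in> P2. e = {a, b}))"

definition NOI_graph :: "'a set \<Rightarrow> 'a set set \<Rightarrow> 'a set set \<Rightarrow> bool" where
  "NOI_graph V EL EQ \<longleftrightarrow> hybrid_graph V EL EQ \<and> bipartite_on V EQ \<and>
     (\<forall>v \<in> V. \<not> ((\<exists>e \<in> EQ. v \<in> e) \<and> (\<exists>e \<in> EL. v \<in> e)))"

definition COI_graph :: "'a set \<Rightarrow> 'a set set \<Rightarrow> 'a set set \<Rightarrow> bool" where
  "COI_graph V EL EQ \<longleftrightarrow> hybrid_graph V EL EQ \<and>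
     (\<exists>P1 P2. P1 \<union> P2 = V \<and> P1 \<inter> P2 = {} \<and>
        (\<forall>e \<in> EQ. \<exists>a \<in> P1. \<exists>b \<in> P2. e = {a, b}) \<and>
        (\<forall>e \<in> EL. e \<subseteq> P1 \<or> e \<subseteq> P2))"

end

theory Submission imports Defs begin

definition other :: "'a set \<Rightarrow> 'a \<Rightarrow> 'a" where
  "other e i = the_elem (e - {i})"

lemma other_eq: "a \<noteq> b \<Longrightarrow> other {a,b} a = b \<and> other {a,b} b = a"
  unfolding other_def by (auto simp: insert_Diff_if)

lemma edge2: "card e = 2 \<Longrightarrow> \<exists>a b. a \<noteq> b \<and> e = {a,b}"
  by (auto simp: card_2_iff)

lemma row_adj:
  assumes fin: "finite V" and E: "\<forall>e\<in>E. e \<subseteq> V \<and> card e = 2" and i: "i \<in> V"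
  shows "(\<Sum>j\<in>V. adj E i j * x j) = (\<Sum>e\<in>{e\<in>E. i \<in> e}. x (other e i))"
proof -
  have "(\<Sum>j\<in>V. adj E i j * x j) = (\<Sum>j\<in>{j\<in>V. j \<noteq> i \<and> {i,j} \<in> E}. x j)"
  proof -
    have "(\<lambda>j. adj E i j * x j) = (\<lambda>j. if j \<noteq> i \<and> {i,j} \<in> E then x j else 0)"
      unfolding adj_def by (auto simp: insert_commute)
    then have "(\<Sum>j\<in>V. adj E i j * x j) = (\<Sum>j\<in>V. if j \<noteq> i \<and> {i,j} \<in> E then x j else 0)"
      by metis
    then show ?thesis by (simp add: sum.inter_filter[OF fin])
  qed
  also have "\<dots> = (\<Sum>e\<in>{e\<in>E. i \<in> e}. x (other e i))"
  proof (rule sum.reindex_bij_witness[where i="\<lambda>e. other e i" and j="\<lambda>j. {i,j}"])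
    fix e assume e: "e \<in> {e\<in>E. i \<in> e}"
    then obtain a b where ab: "a \<noteq> b" "e = {a,b}" using E edge2 by blast
    show "{i, other e i} = e" using e ab other_eq[OF ab(1)] by auto
    show "other e i \<in> {j\<in>V. j \<noteq> i \<and> {i,j} \<in> E}" using e ab other_eq[OF ab(1)] E
      by (auto simp: insert_commute)
  next
    fix j assume j: "j \<in> {j\<in>V. j \<noteq> i \<and> {i,j} \<in> E}"
    then show "other {i,j} i = j" "{i,j} \<in> {e\<in>E. i \<in> e}" using other_eq[of i j] by auto
  next
    fix j assume "j \<in> {j\<in>V. j \<noteq> i \<and> {i,j} \<in> E}"
    then show "x (other {i,j} i) = x j" using other_eq[of i j] by auto
  qed
  finally show ?thesis .
qed

lemma row_deg:
  assumes fin: "finite V" and i: "i \<in> V"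
  shows "(\<Sum>j\<in>V. (if i = j then real (deg E i) else 0) * x j) = (\<Sum>e\<in>{e\<in>E. i \<in> e}. x i)"
proof -
  have "(\<lambda>j. (if i = j then real (deg E i) else 0) * x j) = (\<lambda>j. if i = j then real (deg E i) * x j else 0)"
    by auto
  then have "(\<Sum>j\<in>V. (if i = j then real (deg E i) else 0) * x j) = (\<Sum>j\<in>V. if i = j then real (deg E i) * x j else 0)"
    by metis
  then show ?thesis using i fin by (simp add: deg_def)
qed

lemma row_hyb:
  assumes fin: "finite V" and EL: "\<forall>e\<in>EL. e \<subseteq> V \<and> card e = 2"
    and EQ: "\<forall>e\<in>EQ. e \<subseteq> V \<and> card e = 2" and i: "i \<in> V"
  shows "(\<Sum>j\<in>V. hybrid_laplacian EL EQ i j * x j) =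
     (\<Sum>e\<in>{e\<in>EL. i \<in> e}. x i - x (other e i)) + (\<Sum>e\<in>{e\<in>EQ. i \<in> e}. x i + x (other e i))"
proof -
  have "(\<Sum>j\<in>V. hybrid_laplacian EL EQ i j * x j) =
     ((\<Sum>j\<in>V. (if i = j then real (deg EL i) else 0) * x j) - (\<Sum>j\<in>V. adj EL i j * x j))
     + ((\<Sum>j\<in>V. (if i = j then real (deg EQ i) else 0) * x j) + (\<Sum>j\<in>V. adj EQ i j * x j))"
    unfolding hybrid_laplacian_def laplacian_def signless_laplacian_def
    by (simp add: algebra_simps sum.distrib sum_subtractf)
  also have "\<dots> = (\<Sum>e\<in>{e\<in>EL. i \<in> e}. x i) - (\<Sum>e\<in>{e\<in>EL. i \<in> e}. x (other e i))
     + ((\<Sum>e\<in>{e\<in>EQ. i \<in> e}. x i) + (\<Sum>e\<in>{e\<in>EQ. i \<in> e}. x (other e i)))"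
    using row_deg[OF fin i] row_adj[OF fin EL i] row_adj[OF fin EQ i] by simp
  also have "\<dots> = (\<Sum>e\<in>{e\<in>EL. i \<in> e}. x i - x (other e i)) + (\<Sum>e\<in>{e\<in>EQ. i \<in> e}. x i + x (other e i))"
    by (simp add: sum.distrib sum_subtractf)
  finally show ?thesis .
qed

lemma edge_val1:
  fixes x :: "'a \<Rightarrow> real"
  assumes "a \<noteq> b"
  shows "(\<Sum>i\<in>{a,b}. x i * (x i - x (other {a,b} i))) = (x a - x b)^2"
proof -
  have "(\<Sum>i\<in>{a,b}. x i * (x i - x (other {a,b} i))) = x a * (x a - x b) + x b * (x b - x a)"
    using assms other_eq[OF assms] by simp
  also have "\<dots> = (x a - x b)^2" by (simp add: power2_eq_square algebra_simps)
  finally show ?thesis .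
qed

lemma edge_val2:
  fixes x :: "'a \<Rightarrow> real"
  assumes "a \<noteq> b"
  shows "(\<Sum>i\<in>{a,b}. x i * (x i + x (other {a,b} i))) = (x a + x b)^2"
proof -
  have "(\<Sum>i\<in>{a,b}. x i * (x i + x (other {a,b} i))) = x a * (x a + x b) + x b * (x b + x a)"
    using assms other_eq[OF assms] by simp
  also have "\<dots> = (x a + x b)^2" by (simp add: power2_eq_square algebra_simps)
  finally show ?thesis .
qed

lemma swap_edges:
  assumes fin: "finite V" and E: "\<forall>e\<in>E. e \<subseteq> V \<and> card e = 2"
  shows "(\<Sum>i\<in>V. \<Sum>e\<in>{e\<in>E. i \<in> e}. f i e) = (\<Sum>e\<in>E. \<Sum>i\<in>e. f i e)"
proof -
  have finE: "finite E"
    by (rule finite_subset[of E "Pow V"]) (use E fin in auto)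
  have "(\<Sum>i\<in>V. \<Sum>e\<in>{e\<in>E. i \<in> e}. f i e) = (\<Sum>e\<in>E. \<Sum>i\<in>{i\<in>V. i \<in> e}. f i e)"
    by (rule sum.swap_restrict[OF fin finE])
  also have "\<dots> = (\<Sum>e\<in>E. \<Sum>i\<in>e. f i e)"
  proof (rule sum.cong)
    fix e assume "e \<in> E"
    then have "{i\<in>V. i \<in> e} = e" using E by auto
    then show "(\<Sum>i\<in>{i\<in>V. i \<in> e}. f i e) = (\<Sum>i\<in>e. f i e)" by simp
  qed simp
  finally show ?thesis .
qed

lemma pair_cases: "{a', b'} = {a, b} \<Longrightarrow> (a' = a \<and> b' = b) \<or> (a' = b \<and> b' = a)"
  by (auto simp: doubleton_eq_iff)

lemma edge_facts1:
  fixes x :: "'a \<Rightarrow> real"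
  assumes "card e = 2"
  shows "(\<Sum>i\<in>e. x i * (x i - x (other e i))) \<ge> 0 \<and>
    ((\<Sum>i\<in>e. x i * (x i - x (other e i))) = 0 \<longrightarrow> (\<forall>a b. e = {a,b} \<longrightarrow> x a = x b))"
proof -
  obtain a b where ab: "a \<noteq> b" "e = {a,b}" using edge2[OF assms] by blast
  show ?thesis unfolding ab(2) edge_val1[OF ab(1)]
    by (auto dest!: pair_cases)
qed

lemma edge_facts2:
  fixes x :: "'a \<Rightarrow> real"
  assumes "card e = 2"
  shows "(\<Sum>i\<in>e. x i * (x i + x (other e i))) \<ge> 0 \<and>
    ((\<Sum>i\<in>e. x i * (x i + x (other e i))) = 0 \<longrightarrow> (\<forall>a b. e = {a,b} \<longrightarrow> x a = - x b))"
proof -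
  obtain a b where ab: "a \<noteq> b" "e = {a,b}" using edge2[OF assms] by blast
  show ?thesis unfolding ab(2) edge_val2[OF ab(1)]
    by (auto dest!: pair_cases simp: add_eq_0_iff)
qed

lemma edge_other: "card e = 2 \<Longrightarrow> i \<in> e \<Longrightarrow> e = {i, other e i}"
proof -
  assume "card e = 2" "i \<in> e"
  then obtain a b where ab: "a \<noteq> b" "e = {a,b}" "i = a \<or> i = b" using edge2 by blast
  then show ?thesis using other_eq[OF ab(1)] by (auto simp: insert_commute)
qed

lemma ker_char:
  fixes x :: "'a \<Rightarrow> real"
  assumes hg: "hybrid_graph V EL EQ"
  shows "(\<forall>i\<in>V. (\<Sum>j\<in>V. hybrid_laplacian EL EQ i j * x j) = 0) \<longleftrightarrow>
    (\<forall>e\<in>EL. \<forall>a b. e = {a,b} \<longrightarrow> x a = x b) \<and> (\<forall>e\<in>EQ. \<forall>a b. e = {a,b} \<longrightarrow> x a = - x b)"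
proof -
  have fin: "finite V" and EL: "\<forall>e\<in>EL. e \<subseteq> V \<and> card e = 2"
    and EQ: "\<forall>e\<in>EQ. e \<subseteq> V \<and> card e = 2" using hg unfolding hybrid_graph_def by auto
  have finL: "finite EL" by (rule finite_subset[of EL "Pow V"]) (use EL fin in auto)
  have finQ: "finite EQ" by (rule finite_subset[of EQ "Pow V"]) (use EQ fin in auto)
  show ?thesis
  proof
    assume K: "\<forall>i\<in>V. (\<Sum>j\<in>V. hybrid_laplacian EL EQ i j * x j) = 0"
    define g1 where "g1 e = (\<Sum>i\<in>e. x i * (x i - x (other e i)))" for e
    define g2 where "g2 e = (\<Sum>i\<in>e. x i * (x i + x (other e i)))" for e
    have "0 = (\<Sum>i\<in>V. x i * (\<Sum>j\<in>V. hybrid_laplacian EL EQ i j * x j))"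
      using K by simp
    also have "\<dots> = (\<Sum>i\<in>V. (\<Sum>e\<in>{e\<in>EL. i \<in> e}. x i * (x i - x (other e i))) + (\<Sum>e\<in>{e\<in>EQ. i \<in> e}. x i * (x i + x (other e i))))"
      by (rule sum.cong) (simp_all add: row_hyb[OF fin EL EQ] distrib_left sum_distrib_left)
    also have "\<dots> = (\<Sum>e\<in>EL. g1 e) + (\<Sum>e\<in>EQ. g2 e)"
      unfolding sum.distrib g1_def g2_def
      by (simp only: swap_edges[OF fin EL, of "\<lambda>i e. x i * (x i - x (other e i))"] swap_edges[OF fin EQ, of "\<lambda>i e. x i * (x i + x (other e i))"])
    finally have S: "(\<Sum>e\<in>EL. g1 e) + (\<Sum>e\<in>EQ. g2 e) = 0" by simp
    have n1: "\<forall>e\<in>EL. g1 e \<ge> 0"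
    proof
      fix e assume "e \<in> EL" then have c: "card e = 2" using EL by blast
      show "g1 e \<ge> 0" using edge_facts1[OF c, of x] unfolding g1_def by blast
    qed
    have n2: "\<forall>e\<in>EQ. g2 e \<ge> 0"
    proof
      fix e assume "e \<in> EQ" then have c: "card e = 2" using EQ by blast
      show "g2 e \<ge> 0" using edge_facts2[OF c, of x] unfolding g2_def by blast
    qed
    have s1: "(\<Sum>e\<in>EL. g1 e) \<ge> 0" using n1 by (simp add: sum_nonneg)
    have s2: "(\<Sum>e\<in>EQ. g2 e) \<ge> 0" using n2 by (simp add: sum_nonneg)
    have z1: "(\<Sum>e\<in>EL. g1 e) = 0" and z2: "(\<Sum>e\<in>EQ. g2 e) = 0" using S s1 s2 by linarith+
    have "\<forall>e\<in>EL. g1 e = 0" using z1 n1 sum_nonneg_eq_0_iff[OF finL] by blast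
    moreover have "\<forall>e\<in>EQ. g2 e = 0" using z2 n2 sum_nonneg_eq_0_iff[OF finQ] by blast
    ultimately show "(\<forall>e\<in>EL. \<forall>a b. e = {a,b} \<longrightarrow> x a = x b) \<and> (\<forall>e\<in>EQ. \<forall>a b. e = {a,b} \<longrightarrow> x a = - x b)"
    proof (intro conjI ballI)
      fix e assume a: "\<forall>e\<in>EL. g1 e = 0" "e \<in> EL"
      then have c: "card e = 2" using EL by blast
      have "g1 e = 0" using a by blast
      then show "\<forall>a b. e = {a,b} \<longrightarrow> x a = x b" using edge_facts1[OF c, of x] unfolding g1_def by blast
    next
      fix e assume a: "\<forall>e\<in>EQ. g2 e = 0" "e \<in> EQ"
      then have c: "card e = 2" using EQ by blast
      have "g2 e = 0" using a by blast
      then show "\<forall>a b. e = {a,b} \<longrightarrow> x a = - x b" using edge_facts2[OF c, of x] unfolding g2_def by blast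
    qed
  next
    assume C: "(\<forall>e\<in>EL. \<forall>a b. e = {a,b} \<longrightarrow> x a = x b) \<and> (\<forall>e\<in>EQ. \<forall>a b. e = {a,b} \<longrightarrow> x a = - x b)"
    have HL: "x a = x b" if "e \<in> EL" "e = {a,b}" for e a b using C that by simp
    have HQ: "x a = - x b" if "e \<in> EQ" "e = {a,b}" for e a b using C that by simp
    show "\<forall>i\<in>V. (\<Sum>j\<in>V. hybrid_laplacian EL EQ i j * x j) = 0"
    proof
      fix i assume i: "i \<in> V"
      have "(\<Sum>e\<in>{e\<in>EL. i \<in> e}. x i - x (other e i)) = 0"
      proof (rule sum.neutral, rule ballI)
        fix e assume "e \<in> {e\<in>EL. i \<in> e}"
        then have e: "e \<in> EL" "i \<in> e" by simp_all
        then have "card e = 2" using EL by blast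
        then have "e = {i, other e i}" using e(2) by (rule edge_other)
        then have "x i = x (other e i)" by (rule HL[OF e(1)])
        then show "x i - x (other e i) = 0" by simp
      qed
      moreover have "(\<Sum>e\<in>{e\<in>EQ. i \<in> e}. x i + x (other e i)) = 0"
      proof (rule sum.neutral, rule ballI)
        fix e assume "e \<in> {e\<in>EQ. i \<in> e}"
        then have e: "e \<in> EQ" "i \<in> e" by simp_all
        then have "card e = 2" using EQ by blast
        then have "e = {i, other e i}" using e(2) by (rule edge_other)
        then have "x i = - x (other e i)" by (rule HQ[OF e(1)])
        then show "x i + x (other e i) = 0" by simp
      qed
      ultimately show "(\<Sum>j\<in>V. hybrid_laplacian EL EQ i j * x j) = 0"
        using row_hyb[OF fin EL EQ i] by simp
    qed
  qed
qed

definition cond_on :: "'a set set \<Rightarrow> ('a \<Rightarrow> real) \<Rightarrow> bool" where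
  "cond_on E y \<longleftrightarrow> (\<forall>e\<in>E. \<forall>a b. e = {a,b} \<longrightarrow> y a = y b)"

lemma cond_on_Un: "cond_on (A \<union> B) y = (cond_on A y \<and> cond_on B y)"
  unfolding cond_on_def ball_Un ..

lemma coi_ker:
  assumes hg: "hybrid_graph V EL EQ" and P: "P1 \<union> P2 = V" "P1 \<inter> P2 = {}"
    and Q: "\<forall>e \<in> EQ. \<exists>a \<in> P1. \<exists>b \<in> P2. e = {a, b}"
    and L: "\<forall>e \<in> EL. e \<subseteq> P1 \<or> e \<subseteq> P2"
  shows "x \<in> mat_kernel V (hybrid_laplacian EL EQ) \<longleftrightarrow>
     (\<forall>v. v \<notin> V \<longrightarrow> x v = 0) \<and> cond_on (EL \<union> EQ) (\<lambda>v. (if v \<in> P1 then 1 else -1) * x v)"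
proof -
  define s :: "'a \<Rightarrow> real" where "s v = (if v \<in> P1 then 1 else -1)" for v
  have A: "(\<forall>e\<in>EL. \<forall>a b. e = {a,b} \<longrightarrow> x a = x b) \<longleftrightarrow> (\<forall>e\<in>EL. \<forall>a b. e = {a,b} \<longrightarrow> s a * x a = s b * x b)"
  proof -
    have "x a = x b \<longleftrightarrow> s a * x a = s b * x b" if "e \<in> EL" "e = {a,b}" for e a b
    proof -
      have "e \<subseteq> P1 \<or> e \<subseteq> P2" using L that(1) by blast
      then have "(a \<in> P1 \<and> b \<in> P1) \<or> (a \<in> P2 \<and> b \<in> P2)" using that(2) by blast
      then have "s a = s b" using P unfolding s_def by auto
      moreover have "s a \<noteq> 0" unfolding s_def by simp
      ultimately show ?thesis by simp
    qed
    note eq = this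
    show ?thesis
    proof (intro iffI ballI allI impI)
      fix e a b assume H: "\<forall>e\<in>EL. \<forall>a b. e = {a,b} \<longrightarrow> x a = x b" and e: "e \<in> EL" "e = {a,b}"
      show "s a * x a = s b * x b" using H[rule_format, OF e] eq[OF e] by simp
    next
      fix e a b assume H: "\<forall>e\<in>EL. \<forall>a b. e = {a,b} \<longrightarrow> s a * x a = s b * x b" and e: "e \<in> EL" "e = {a,b}"
      show "x a = x b" using H[rule_format, OF e] eq[OF e] by simp
    qed
  qed
  have B: "(\<forall>e\<in>EQ. \<forall>a b. e = {a,b} \<longrightarrow> x a = - x b) \<longleftrightarrow> (\<forall>e\<in>EQ. \<forall>a b. e = {a,b} \<longrightarrow> s a * x a = s b * x b)"
  proof -
    have "x a = - x b \<longleftrightarrow> s a * x a = s b * x b" if "e \<in> EQ" "e = {a,b}" for e a b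
    proof -
      have ex: "\<exists>c\<in>P1. \<exists>d\<in>P2. e = {c,d}" using Q that(1) by (rule bspec)
      obtain c d where cd: "c \<in> P1" "d \<in> P2" "e = {c,d}" using ex by metis
      have "{a,b} = {c,d}" using cd(3) that(2) by simp
      then have ab: "(a = c \<and> b = d) \<or> (a = d \<and> b = c)" by (rule pair_cases)
      have "d \<notin> P1" using cd(2) P(2) by blast
      then have "s c = 1" "s d = -1" using cd(1) unfolding s_def by simp_all
      then have "s a = - s b" using ab by auto
      moreover have "s a \<noteq> 0" unfolding s_def by simp
      ultimately have "s b * x b = s a * (- x b)" by simp
      then show ?thesis using \<open>s a \<noteq> 0\<close> by (metis mult_cancel_left)
    qed
    note eq = this
    show ?thesis
    proof (intro iffI ballI allI impI)
      fix e a b assume H: "\<forall>e\<in>EQ. \<forall>a b. e = {a,b} \<longrightarrow> x a = - x b" and e: "e \<in> EQ" "e = {a,b}"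
      show "s a * x a = s b * x b" using H[rule_format, OF e] eq[OF e] by simp
    next
      fix e a b assume H: "\<forall>e\<in>EQ. \<forall>a b. e = {a,b} \<longrightarrow> s a * x a = s b * x b" and e: "e \<in> EQ" "e = {a,b}"
      show "x a = - x b" using H[rule_format, OF e] eq[OF e] by simp
    qed
  qed
  show ?thesis
    unfolding mat_kernel_def mem_Collect_eq cond_on_Un ker_char[OF hg] A B
    unfolding cond_on_def s_def by (rule refl)
qed

theorem mainTheorem7:
  fixes V :: "'a set" and EL EQ :: "'a set set"
  assumes "COI_graph V EL EQ"
  shows "\<exists>EL' EQ'. NOI_graph V EL' EQ' \<and>
           mat_kernel V (hybrid_laplacian EL' EQ') = mat_kernel V (hybrid_laplacian EL EQ)"
proof -
  have hg: "hybrid_graph V EL EQ" using assms unfolding COI_graph_def by simp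
  have "\<exists>P1 P2. P1 \<union> P2 = V \<and> P1 \<inter> P2 = {} \<and>
        (\<forall>e \<in> EQ. \<exists>a \<in> P1. \<exists>b \<in> P2. e = {a, b}) \<and>
        (\<forall>e \<in> EL. e \<subseteq> P1 \<or> e \<subseteq> P2)" using assms unfolding COI_graph_def by simp
  then obtain P1 P2 where P: "P1 \<union> P2 = V" "P1 \<inter> P2 = {}"
    and Q: "\<forall>e \<in> EQ. \<exists>a \<in> P1. \<exists>b \<in> P2. e = {a, b}"
    and L: "\<forall>e \<in> EL. e \<subseteq> P1 \<or> e \<subseteq> P2" by metis
  have fin: "finite V" and EV: "\<forall>e\<in>EL \<union> EQ. e \<subseteq> V \<and> card e = 2"
    using hg unfolding hybrid_graph_def by simp_all
  define E where "E = EL \<union> EQ"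
  define R where "R a b \<longleftrightarrow> a \<in> V \<and> b \<in> V \<and> (\<forall>y. cond_on E y \<longrightarrow> y a = y b)" for a b
  have Rsym: "R b a" if "R a b" for a b using that unfolding R_def by auto
  have Rtrans: "R a c" if "R a b" "R b c" for a b c using that unfolding R_def by auto
  have RV: "a \<in> V \<and> b \<in> V" if "R a b" for a b using that unfolding R_def by auto
  have Rrefl: "R a a" if "a \<in> V" for a using that unfolding R_def by simp
  have Rin: "R a c" if "R a b" "c \<in> {a,b}" for a b c
  proof -
    have "c = a \<or> c = b" using that(2) by simp
    then show ?thesis using Rrefl[of a] RV[OF that(1)] that(1) by (elim disjE) simp_all
  qed
  have Redge: "R a b" if "e \<in> E" "e = {a,b}" for e a b
  proof -
    have "e \<subseteq> V" using EV that(1) unfolding E_def by blast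
    then have "a \<in> V" "b \<in> V" using that(2) by simp_all
    moreover have "y a = y b" if "cond_on E y" for y
      using that[unfolded cond_on_def, rule_format, OF \<open>e \<in> E\<close> \<open>e = {a,b}\<close>] .
    ultimately show ?thesis unfolding R_def by simp
  qed
  have P2n: "b \<notin> P1" if "b \<in> P2" for b using that P(2) by blast
  have bad: False if "R a c" "R a d" "c \<in> P1" "d \<in> P2" "\<forall>c. R a c \<longrightarrow> (c \<in> P1 \<longleftrightarrow> a \<in> P1)" for a c d
  proof -
    have "c \<in> P1 \<longleftrightarrow> a \<in> P1" "d \<in> P1 \<longleftrightarrow> a \<in> P1" using that(5) that(1,2) by simp_all
    then show False using that(3) P2n[OF that(4)] by simp
  qed
  define EQ' where "EQ' = {{a,b}|a b. a \<in> P1 \<and> b \<in> P2 \<and> R a b}"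
  define EL' where "EL' = {{a,b}|a b. a \<noteq> b \<and> R a b \<and> (\<forall>c. R a c \<longrightarrow> (c \<in> P1 \<longleftrightarrow> a \<in> P1))}"
  have mQ: "\<exists>a b. e = {a,b} \<and> a \<in> P1 \<and> b \<in> P2 \<and> R a b" if "e \<in> EQ'" for e
    using that unfolding EQ'_def by simp
  have mL: "\<exists>a b. e = {a,b} \<and> a \<noteq> b \<and> R a b \<and> (\<forall>c. R a c \<longrightarrow> (c \<in> P1 \<longleftrightarrow> a \<in> P1))" if "e \<in> EL'" for e
    using that unfolding EL'_def by simp
  have iQ: "{a,b} \<in> EQ'" if "a \<in> P1" "b \<in> P2" "R a b" for a b
    using that unfolding EQ'_def by blast
  have iL: "{a,b} \<in> EL'" if "a \<noteq> b" "R a b" "\<forall>c. R a c \<longrightarrow> (c \<in> P1 \<longleftrightarrow> a \<in> P1)" for a b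
    using that unfolding EL'_def by blast
  have QL: "(\<forall>e \<in> EQ'. \<exists>a \<in> P1. \<exists>b \<in> P2. e = {a, b})"
  proof
    fix e assume "e \<in> EQ'"
    from mQ[OF this] obtain a b where "e = {a,b}" "a \<in> P1" "b \<in> P2" by metis
    then show "\<exists>a \<in> P1. \<exists>b \<in> P2. e = {a, b}" by metis
  qed
  have LL: "\<forall>e \<in> EL'. e \<subseteq> P1 \<or> e \<subseteq> P2"
  proof
    fix e assume "e \<in> EL'"
    from mL[OF this] obtain a b where ab: "e = {a,b}" "R a b" "\<forall>c. R a c \<longrightarrow> (c \<in> P1 \<longleftrightarrow> a \<in> P1)" by metis
    have iff: "b \<in> P1 \<longleftrightarrow> a \<in> P1" using ab(3) ab(2) by simp
    have V: "a \<in> V" "b \<in> V" using RV[OF ab(2)] by simp_all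
    show "e \<subseteq> P1 \<or> e \<subseteq> P2"
    proof (cases "a \<in> P1")
      case True then show ?thesis using iff ab(1) by simp
    next
      case False then have "a \<in> P2" "b \<in> P2" using iff V P(1) by blast+
      then show ?thesis using ab(1) by simp
    qed
  qed
  have hg': "hybrid_graph V EL' EQ'"
    unfolding hybrid_graph_def
  proof (intro conjI)
    show "finite V" by (rule fin)
  next
    show "\<forall>e\<in>EL' \<union> EQ'. e \<subseteq> V \<and> card e = 2"
    proof
    fix e assume "e \<in> EL' \<union> EQ'"
    then show "e \<subseteq> V \<and> card e = 2"
    proof
      assume "e \<in> EL'"
      from mL[OF this] obtain a b where ab: "e = {a,b}" "a \<noteq> b" "R a b" by metis
      then show ?thesis using RV[OF ab(3)] by simp
    next
      assume "e \<in> EQ'"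
      from mQ[OF this] obtain a b where ab: "e = {a,b}" "a \<in> P1" "b \<in> P2" "R a b" by metis
      have "a \<noteq> b" using ab(2) P2n[OF ab(3)] by blast
      then show ?thesis using RV[OF ab(4)] ab(1) by simp
    qed
    qed
  next
    show "EL' \<inter> EQ' = {}"
    proof (rule ccontr)
      assume "EL' \<inter> EQ' \<noteq> {}"
      then obtain e where e: "e \<in> EL'" "e \<in> EQ'" by blast
      from mL[OF e(1)] obtain a b where ab: "e = {a,b}" "R a b" "\<forall>c. R a c \<longrightarrow> (c \<in> P1 \<longleftrightarrow> a \<in> P1)" by metis
      from mQ[OF e(2)] obtain c d where cd: "e = {c,d}" "c \<in> P1" "d \<in> P2" by metis
      have "c \<in> {a,b}" "d \<in> {a,b}" using ab(1) cd(1) by blast+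
      then have "R a c" "R a d" using Rin[OF ab(2)] by simp_all
      then show False using bad cd(2,3) ab(3) by blast
    qed
  qed
  have noi: "NOI_graph V EL' EQ'"
    unfolding NOI_graph_def
  proof (intro conjI ballI)
    show "hybrid_graph V EL' EQ'" by (rule hg')
    show "bipartite_on V EQ'" unfolding bipartite_on_def using P QL by blast
  next
    fix v assume "v \<in> V"
    show "\<not> ((\<exists>e\<in>EQ'. v \<in> e) \<and> (\<exists>e\<in>EL'. v \<in> e))"
    proof
      assume "(\<exists>e\<in>EQ'. v \<in> e) \<and> (\<exists>e\<in>EL'. v \<in> e)"
      then obtain e1 e2 where e: "e1 \<in> EQ'" "v \<in> e1" "e2 \<in> EL'" "v \<in> e2" by blast
      from mL[OF e(3)] obtain a b where ab: "e2 = {a,b}" "R a b" "\<forall>c. R a c \<longrightarrow> (c \<in> P1 \<longleftrightarrow> a \<in> P1)" by metis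
      from mQ[OF e(1)] obtain c d where cd: "e1 = {c,d}" "c \<in> P1" "d \<in> P2" "R c d" by metis
      have "v \<in> {a,b}" using e(4) ab(1) by simp
      then have av: "R a v" by (rule Rin[OF ab(2)])
      have "v \<in> {c,d}" using e(2) cd(1) by simp
      then have "v = c \<or> v = d" by simp
      then have "R v c \<and> R v d"
      proof
        assume "v = c" then show ?thesis using Rrefl RV[OF cd(4)] cd(4) by simp
      next
        assume "v = d" then show ?thesis using Rrefl RV[OF cd(4)] Rsym[OF cd(4)] by simp
      qed
      then have "R a c" "R a d" using Rtrans[OF av] by simp_all
      then show False using bad cd(2,3) ab(3) by blast
    qed
  qed
  have condeq: "cond_on (EL' \<union> EQ') y \<longleftrightarrow> cond_on E y" for y
  proof
    assume C: "cond_on E y"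
    show "cond_on (EL' \<union> EQ') y" unfolding cond_on_def
    proof (intro ballI allI impI)
      fix e a b assume e: "e \<in> EL' \<union> EQ'" "e = {a,b}"
      have "\<exists>a0 b0. e = {a0,b0} \<and> R a0 b0"
      proof (cases "e \<in> EL'")
        case True from mL[OF this] show ?thesis by metis
      next
        case False then have "e \<in> EQ'" using e(1) by simp
        from mQ[OF this] show ?thesis by metis
      qed
      then obtain a0 b0 where ab0: "e = {a0,b0}" "R a0 b0" by metis
      have "y a0 = y b0" using ab0(2) C unfolding R_def by simp
      moreover have "{a,b} = {a0,b0}" using e(2) ab0(1) by simp
      then have "(a = a0 \<and> b = b0) \<or> (a = b0 \<and> b = a0)" by (rule pair_cases)
      ultimately show "y a = y b" by auto
    qed
  next
    assume C: "cond_on (EL' \<union> EQ') y"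
    have Cq: "y a = y b" if "a \<in> P1" "b \<in> P2" "R a b" for a b
    proof -
      have "{a,b} \<in> EL' \<union> EQ'" using iQ[OF that] by simp
      then show ?thesis using C[unfolded cond_on_def, rule_format, of "{a,b}" a b] by simp
    qed
    have Cl: "y a = y b" if "a \<noteq> b" "R a b" "\<forall>c. R a c \<longrightarrow> (c \<in> P1 \<longleftrightarrow> a \<in> P1)" for a b
    proof -
      have "{a,b} \<in> EL' \<union> EQ'" using iL[OF that] by simp
      then show ?thesis using C[unfolded cond_on_def, rule_format, of "{a,b}" a b] by simp
    qed
    show "cond_on E y" unfolding cond_on_def
    proof (intro ballI allI impI)
      fix e a b assume e: "e \<in> E" "e = {a,b}"
      have Rab: "R a b" by (rule Redge[OF e])
      have "card e = 2" using EV e(1) unfolding E_def by blast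
      then have ab: "a \<noteq> b" using e(2) by (cases "a = b") simp_all
      have V: "a \<in> V" "b \<in> V" using RV[OF Rab] by simp_all
      have Vp: "v \<in> P1 \<or> v \<in> P2" if "v \<in> V" for v using that P(1) by blast
      show "y a = y b"
      proof (cases "a \<in> P1")
        case aP1: True
        show ?thesis
        proof (cases "b \<in> P1")
          case False then have "b \<in> P2" using Vp[OF V(2)] by simp
          then show ?thesis using Cq aP1 Rab by simp
        next
          case bP1: True
          show ?thesis
          proof (cases "\<forall>c. R a c \<longrightarrow> (c \<in> P1 \<longleftrightarrow> a \<in> P1)")
            case True then show ?thesis using Cl ab Rab by simp
          next
            case False
            then obtain c where c: "R a c" "\<not> (c \<in> P1 \<longleftrightarrow> a \<in> P1)" by blast
            have cP2: "c \<in> P2" using c(2) aP1 Vp RV[OF c(1)] by blast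
            have "R b c" using Rtrans[OF Rsym[OF Rab] c(1)] .
            then have "y b = y c" using Cq[OF bP1 cP2] by simp
            moreover have "y a = y c" using Cq[OF aP1 cP2 c(1)] .
            ultimately show ?thesis by simp
          qed
        qed
      next
        case aP1: False
        then have aP2: "a \<in> P2" using Vp[OF V(1)] by simp
        show ?thesis
        proof (cases "b \<in> P1")
          case True then show ?thesis using Cq[OF True aP2 Rsym[OF Rab]] by simp
        next
          case bP1: False
          then have bP2: "b \<in> P2" using Vp[OF V(2)] by simp
          show ?thesis
          proof (cases "\<forall>c. R a c \<longrightarrow> (c \<in> P1 \<longleftrightarrow> a \<in> P1)")
            case True then show ?thesis using Cl ab Rab by simp
          next
            case False
            then obtain c where c: "R a c" "\<not> (c \<in> P1 \<longleftrightarrow> a \<in> P1)" by blast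
            have cP1: "c \<in> P1" using c(2) aP1 by blast
            have "R c b" using Rsym[OF Rtrans[OF Rsym[OF Rab] c(1)]] .
            then have "y c = y b" using Cq[OF cP1 bP2] by simp
            moreover have "y c = y a" using Cq[OF cP1 aP2 Rsym[OF c(1)]] .
            ultimately show ?thesis by simp
          qed
        qed
      qed
    qed
  qed
  have "mat_kernel V (hybrid_laplacian EL' EQ') = mat_kernel V (hybrid_laplacian EL EQ)"
  proof (rule set_eqI)
    fix x :: "'a \<Rightarrow> real"
    show "x \<in> mat_kernel V (hybrid_laplacian EL' EQ') \<longleftrightarrow> x \<in> mat_kernel V (hybrid_laplacian EL EQ)"
      unfolding coi_ker[OF hg' P QL LL] coi_ker[OF hg P Q L] condeq E_def ..
  qed
  with noi show ?thesis by blast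
qed

end
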